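(* Let $n_r \ge 1$ and let $\mathcal{Q}^a \subseteq \mathbb{C}^{n_r}$ be a set of (angular channel) vectors. For $\boldsymbol{v}\in\mathbb{C}^{n_r}$ let its support vector $\boldsymbol{v}_s\in\{0,1\}^{n_r}$ be defined by $v_{s,i}=1$ if $v_i\neq 0$ and $v_{s,i}=0$ if $v_i=0$, and let $\mathcal{Q}^a_s=\{\boldsymbol{q}_s : \boldsymbol{q}\in\mathcal{Q}^a\}\subseteq\{0,1\}^{n_r}$. Assume $\mathcal{Q}^a_s$ satisfies the inclusion property: whenever $\boldsymbol{a}\in\mathcal{Q}^a_s$ and $\boldsymbol{b}\in\{0,1\}^{n_r}$ has its set of nonzero indices contained in that of $\boldsymbol{a}$, then $\boldsymbol{b}\in\mathcal{Q}^a_s$. Let $\boldsymbol{G}\in\{0,1\}^{m\times n_r}$ be a binary matrix such that the linear encoding map $\boldsymbol{s}\mapsto \boldsymbol{G}\boldsymbol{s}$ computed over $\mathbb{F}_2$ is injective on $\mathcal{Q}^a_s$. Regard $\boldsymbol{G}$ as a complex matrix with real entries $0,1$. Then for all $\boldsymbol{q}^a_1,\boldsymbol{q}^a_2\in\mathcal{Q}^a$ we have $\boldsymbol{q}^a_1\neq\boldsymbol{q}^a_2$ if and only if $\boldsymbol{G}\boldsymbol{q}^a_1\neq\boldsymbol{G}\boldsymbol{q}^a_2$.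
   Context: $\mathbb{F}_2$ denotes the field with two elements; a binary linear source code is given by a generator matrix $\boldsymbol{G}$ over $\mathbb{F}_2$, encoding $\boldsymbol{s}$ as $\boldsymbol{G}\boldsymbol{s}$ (mod 2). *)

theory Defs
  imports Complex_Main
begin

text \<open>Vectors of length n are modelled as functions on nat that vanish outside {..<n};
  an m x n matrix as a function nat => nat => _ (row, column).\<close>

definition is_cvec :: "nat \<Rightarrow> (nat \<Rightarrow> complex) \<Rightarrow> bool" where
  "is_cvec n v \<longleftrightarrow> (\<forall>i\<ge>n. v i = 0)"

definition is_bvec :: "nat \<Rightarrow> (nat \<Rightarrow> nat) \<Rightarrow> bool" where
  "is_bvec n b \<longleftrightarrow> (\<forall>i<n. b i \<in> {0,1}) \<and> (\<forall>i\<ge>n. b i = 0)"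

definition is_bmat :: "nat \<Rightarrow> nat \<Rightarrow> (nat \<Rightarrow> nat \<Rightarrow> nat) \<Rightarrow> bool" where
  "is_bmat m n G \<longleftrightarrow> (\<forall>i<m. \<forall>j<n. G i j \<in> {0,1})"

definition supp_vec :: "nat \<Rightarrow> (nat \<Rightarrow> complex) \<Rightarrow> (nat \<Rightarrow> nat)" where
  "supp_vec n v = (\<lambda>i. if i < n \<and> v i \<noteq> 0 then 1 else 0)"

definition inclusion_property :: "nat \<Rightarrow> (nat \<Rightarrow> nat) set \<Rightarrow> bool" where
  "inclusion_property n S \<longleftrightarrow>
     (\<forall>a\<in>S. \<forall>b. is_bvec n b \<and> {i. i < n \<and> b i \<noteq> 0} \<subseteq> {i. i < n \<and> a i \<noteq> 0} \<longrightarrow> b \<in> S)"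

definition enc_F2 :: "nat \<Rightarrow> nat \<Rightarrow> (nat \<Rightarrow> nat \<Rightarrow> nat) \<Rightarrow> (nat \<Rightarrow> nat) \<Rightarrow> (nat \<Rightarrow> nat)" where
  "enc_F2 m n G s = (\<lambda>i. if i < m then (\<Sum>j<n. G i j * s j) mod 2 else 0)"

definition cmat_vec :: "nat \<Rightarrow> nat \<Rightarrow> (nat \<Rightarrow> nat \<Rightarrow> nat) \<Rightarrow> (nat \<Rightarrow> complex) \<Rightarrow> (nat \<Rightarrow> complex)" where
  "cmat_vec m n G q = (\<lambda>i. if i < m then (\<Sum>j<n. of_nat (G i j) * q j) else 0)"

end

theory Submission imports Defs begin

lemma indep_lemma:
  fixes A :: "nat \<Rightarrow> nat \<Rightarrow> int"
  assumes "finite C"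
  shows "\<And>A. (\<forall>y :: nat \<Rightarrow> int. (\<exists>j\<in>C. odd (y j)) \<longrightarrow> (\<exists>i\<in>R. odd (\<Sum>j\<in>C. A i j * y j)))
    \<Longrightarrow> (\<forall>i\<in>R. (\<Sum>j\<in>C. of_int (A i j) * x j) = (0::complex)) \<Longrightarrow> (\<forall>j\<in>C. x j = 0)"
  using assms
proof (induction C rule: finite_induct)
  case empty
  then show ?case by simp
next
  case (insert c F)
  note hyp = insert.prems(1) and eqs = insert.prems(2)
  obtain i where iR: "i \<in> R" and oi: "odd (\<Sum>j\<in>insert c F. A i j * (if j = c then 1 else 0))"
    using hyp[rule_format, of "\<lambda>j. if j = c then 1 else 0"] by auto
  have oic: "odd (A i c)" using oi insert.hyps by (simp add: sum.insert_if if_distrib cong: if_cong)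
  define A' where "A' = (\<lambda>r j. A i c * A r j - A r c * A i j)"
  have hyp': "\<forall>y :: nat \<Rightarrow> int. (\<exists>j\<in>F. odd (y j)) \<longrightarrow> (\<exists>r\<in>R. odd (\<Sum>j\<in>F. A' r j * y j))"
  proof (intro allI impI, rule ccontr)
    fix y :: "nat \<Rightarrow> int"
    assume ex: "\<exists>j\<in>F. odd (y j)" and nex: "\<not> (\<exists>r\<in>R. odd (\<Sum>j\<in>F. A' r j * y j))"
    define t where "t = (\<Sum>j\<in>F. A i j * y j)"
    define y' where "y' = y(c := t)"
    have sF: "(\<Sum>j\<in>F. B j * y' j) = (\<Sum>j\<in>F. B j * y j)" for B
      using insert.hyps by (intro sum.cong) (auto simp: y'_def)
    have sC: "(\<Sum>j\<in>insert c F. B j * y' j) = B c * t + (\<Sum>j\<in>F. B j * y j)" for B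
      using insert.hyps sF by (simp add: y'_def)
    have "\<exists>j\<in>insert c F. odd (y' j)" using ex insert.hyps by (auto simp: y'_def)
    then obtain r where rR: "r \<in> R" and odr: "odd (\<Sum>j\<in>insert c F. A r j * y' j)"
      using hyp by blast
    define S where "S = (\<Sum>j\<in>F. A r j * y j)"
    have ev1: "even (\<Sum>j\<in>F. A' r j * y j)" using nex rR by blast
    have "(\<Sum>j\<in>F. A' r j * y j) = A i c * S - A r c * t"
      unfolding A'_def S_def t_def by (simp add: algebra_simps sum_subtractf sum_distrib_left)
    with ev1 have ev2: "even (A i c * S - A r c * t)" by simp
    have ev3: "even (A r c * t * (A i c + 1))" using oic by simp
    have "A i c * (A r c * t + S) = (A i c * S - A r c * t) + A r c * t * (A i c + 1)"
      by (simp add: algebra_simps)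
    with ev2 ev3 have "even (A i c * (A r c * t + S))" by simp
    with oic have "even (A r c * t + S)" by simp
    moreover have "(\<Sum>j\<in>insert c F. A r j * y' j) = A r c * t + S" using sC S_def by simp
    ultimately show False using odr by simp
  qed
  have eqs': "\<forall>r\<in>R. (\<Sum>j\<in>F. of_int (A' r j) * x j) = (0::complex)"
  proof
    fix r assume rR: "r \<in> R"
    have e1: "of_int (A r c) * x c + (\<Sum>j\<in>F. of_int (A r j) * x j) = (0::complex)"
      using eqs rR insert.hyps by simp
    have e2: "of_int (A i c) * x c + (\<Sum>j\<in>F. of_int (A i j) * x j) = (0::complex)"
      using eqs iR insert.hyps by simp
    have "(\<Sum>j\<in>F. of_int (A' r j) * x j) = of_int (A i c) * (\<Sum>j\<in>F. of_int (A r j) * x j)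
        - of_int (A r c) * (\<Sum>j\<in>F. of_int (A i j) * x j)"
      unfolding A'_def by (simp add: algebra_simps sum_subtractf sum_distrib_left)
    also have "\<dots> = 0"
    proof -
      have h1: "(\<Sum>j\<in>F. of_int (A r j) * x j) = - (of_int (A r c) * x c :: complex)"
        using e1 by (simp add: eq_neg_iff_add_eq_0 add.commute)
      have h2: "(\<Sum>j\<in>F. of_int (A i j) * x j) = - (of_int (A i c) * x c :: complex)"
        using e2 by (simp add: eq_neg_iff_add_eq_0 add.commute)
      show ?thesis unfolding h1 h2 by (simp add: algebra_simps)
    qed
    finally show "(\<Sum>j\<in>F. of_int (A' r j) * x j) = (0::complex)" .
  qed
  have xF: "\<forall>j\<in>F. x j = 0" using insert.IH[OF hyp' eqs'] .
  have "of_int (A i c) * x c + (\<Sum>j\<in>F. of_int (A i j) * x j) = (0::complex)"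
    using eqs iR insert.hyps by simp
  with xF have "of_int (A i c) * x c = 0" by simp
  moreover have "A i c \<noteq> 0" using oic by auto
  ultimately have "x c = 0" by simp
  with xF show ?case by simp
qed

theorem theorem1:
  fixes n m :: nat and Q :: "(nat \<Rightarrow> complex) set" and G :: "nat \<Rightarrow> nat \<Rightarrow> nat"
  assumes "n \<ge> 1"
    and "\<forall>q\<in>Q. is_cvec n q"
    and "inclusion_property n (supp_vec n ` Q)"
    and "is_bmat m n G"
    and "inj_on (enc_F2 m n G) (supp_vec n ` Q)"
    and "q1 \<in> Q" and "q2 \<in> Q"
  shows "q1 \<noteq> q2 \<longleftrightarrow> cmat_vec m n G q1 \<noteq> cmat_vec m n G q2"
proof
  assume "cmat_vec m n G q1 \<noteq> cmat_vec m n G q2"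
  then show "q1 \<noteq> q2" by auto
next
  assume neq: "q1 \<noteq> q2"
  show "cmat_vec m n G q1 \<noteq> cmat_vec m n G q2"
  proof
    assume eqG: "cmat_vec m n G q1 = cmat_vec m n G q2"
    define C where "C = {j. j < n \<and> (q1 j \<noteq> 0 \<or> q2 j \<noteq> 0)}"
    define A where "A = (\<lambda>i j. int (G i j))"
    define x where "x = (\<lambda>j. q1 j - q2 j)"
    have finC: "finite C" unfolding C_def by simp
    have Csub: "C \<subseteq> {..<n}" unfolding C_def by auto
    have cv1: "\<forall>j\<ge>n. q1 j = 0" using assms(2,6) by (auto simp: is_cvec_def)
    have cv2: "\<forall>j\<ge>n. q2 j = 0" using assms(2,7) by (auto simp: is_cvec_def)
    have eqs: "\<forall>i\<in>{..<m}. (\<Sum>j\<in>C. of_int (A i j) * x j) = (0::complex)"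
    proof
      fix i assume "i \<in> {..<m}"
      then have "(\<Sum>j<n. of_nat (G i j) * q1 j) = (\<Sum>j<n. of_nat (G i j) * q2 j)"
        using fun_cong[OF eqG, of i] by (simp add: cmat_vec_def)
      then have "(\<Sum>j<n. of_nat (G i j) * x j) = 0"
        by (simp add: x_def algebra_simps sum_subtractf)
      moreover have "(\<Sum>j\<in>C. of_nat (G i j) * x j) = (\<Sum>j<n. of_nat (G i j) * x j)"
        using Csub by (intro sum.mono_neutral_left) (auto simp: C_def x_def)
      ultimately show "(\<Sum>j\<in>C. of_int (A i j) * x j) = (0::complex)" by (simp add: A_def)
    qed
    have hyp: "\<forall>y :: nat \<Rightarrow> int. (\<exists>j\<in>C. odd (y j)) \<longrightarrow> (\<exists>i\<in>{..<m}. odd (\<Sum>j\<in>C. A i j * y j))"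
    proof (intro allI impI, rule ccontr)
      fix y :: "nat \<Rightarrow> int"
      assume ex: "\<exists>j\<in>C. odd (y j)" and nex: "\<not> (\<exists>i\<in>{..<m}. odd (\<Sum>j\<in>C. A i j * y j))"
      define T where "T = {j\<in>C. odd (y j)}"
      define TA where "TA = {j\<in>T. q1 j \<noteq> 0}"
      define TB where "TB = {j\<in>T. q1 j = 0}"
      define a where "a = (\<lambda>j. if j \<in> TA then 1 else (0::nat))"
      define b where "b = (\<lambda>j. if j \<in> TB then 1 else (0::nat))"
      have TC: "T \<subseteq> C" unfolding T_def by auto
      have finT: "finite T" using finC TC finite_subset by blast
      have TAB: "T = TA \<union> TB" "TA \<inter> TB = {}" unfolding TA_def TB_def by auto
      have TBq2: "\<forall>j\<in>TB. q2 j \<noteq> 0 \<and> j < n" unfolding TB_def T_def C_def by auto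
      have TAq1: "\<forall>j\<in>TA. q1 j \<noteq> 0 \<and> j < n" unfolding TA_def T_def C_def by auto
      have aS: "a \<in> supp_vec n ` Q"
      proof -
        have m: "supp_vec n q1 \<in> supp_vec n ` Q" using assms(6) by simp
        have "is_bvec n a" using TAq1 by (auto simp: is_bvec_def a_def)
        moreover have "{i. i < n \<and> a i \<noteq> 0} \<subseteq> {i. i < n \<and> supp_vec n q1 i \<noteq> 0}"
          using TAq1 by (auto simp: a_def supp_vec_def)
        ultimately show ?thesis using assms(3) m unfolding inclusion_property_def by blast
      qed
      have bS: "b \<in> supp_vec n ` Q"
      proof -
        have m: "supp_vec n q2 \<in> supp_vec n ` Q" using assms(7) by simp
        have "is_bvec n b" using TBq2 by (auto simp: is_bvec_def b_def)
        moreover have "{i. i < n \<and> b i \<noteq> 0} \<subseteq> {i. i < n \<and> supp_vec n q2 i \<noteq> 0}"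
          using TBq2 by (auto simp: b_def supp_vec_def)
        ultimately show ?thesis using assms(3) m unfolding inclusion_property_def by blast
      qed
      have "enc_F2 m n G a = enc_F2 m n G b"
      proof
        fix i
        show "enc_F2 m n G a i = enc_F2 m n G b i"
        proof (cases "i < m")
          case False then show ?thesis by (simp add: enc_F2_def)
        next
          case True
          have sa: "(\<Sum>j<n. G i j * a j) = (\<Sum>j\<in>TA. G i j)"
          proof -
            have "(\<Sum>j<n. G i j * a j) = (\<Sum>j\<in>TA. G i j * a j)"
              using TAq1 by (intro sum.mono_neutral_right) (auto simp: a_def)
            also have "\<dots> = (\<Sum>j\<in>TA. G i j)" by (simp add: a_def)
            finally show ?thesis .
          qed
          have sb: "(\<Sum>j<n. G i j * b j) = (\<Sum>j\<in>TB. G i j)"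
          proof -
            have "(\<Sum>j<n. G i j * b j) = (\<Sum>j\<in>TB. G i j * b j)"
              using TBq2 by (intro sum.mono_neutral_right) (auto simp: b_def)
            also have "\<dots> = (\<Sum>j\<in>TB. G i j)" by (simp add: b_def)
            finally show ?thesis .
          qed
          have ev: "even (\<Sum>j\<in>C. A i j * y j)" using nex True by blast
          have "(\<Sum>j\<in>C. A i j * y j) = (\<Sum>j\<in>T. A i j * y j) + (\<Sum>j\<in>C - T. A i j * y j)"
            using finC TC by (simp add: sum.subset_diff)
          moreover have "even (\<Sum>j\<in>C - T. A i j * y j)"
            by (intro dvd_sum) (auto simp: T_def)
          ultimately have ev2: "even (\<Sum>j\<in>T. A i j * y j)" using ev by simp
          have "(\<Sum>j\<in>T. A i j * y j) = (\<Sum>j\<in>T. A i j) + (\<Sum>j\<in>T. A i j * (y j - 1))"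
            by (simp add: sum.distrib[symmetric] algebra_simps)
          moreover have "even (\<Sum>j\<in>T. A i j * (y j - 1))"
            by (intro dvd_sum) (auto simp: T_def)
          ultimately have ev3: "even (\<Sum>j\<in>T. A i j)" using ev2 by simp
          have "(\<Sum>j\<in>T. A i j) = (\<Sum>j\<in>TA. A i j) + (\<Sum>j\<in>TB. A i j)"
            using TAB finT by (simp add: sum.union_disjoint)
          then have "even (int (\<Sum>j\<in>TA. G i j) + int (\<Sum>j\<in>TB. G i j))"
            using ev3 by (simp add: A_def)
          then have "even ((\<Sum>j\<in>TA. G i j) + (\<Sum>j\<in>TB. G i j))"
            by (simp only: of_nat_add[symmetric] even_of_nat)
          then have "(\<Sum>j\<in>TA. G i j) mod 2 = (\<Sum>j\<in>TB. G i j) mod 2"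
            by (metis even_add mod2_eq_if)
          then show ?thesis using True sa sb by (simp add: enc_F2_def)
        qed
      qed
      then have "a = b" using assms(5) aS bS by (auto dest: inj_onD)
      then have "TA = TB" unfolding a_def b_def by (metis one_neq_zero subsetI subset_antisym)
      then have "T = {}" using TAB by auto
      then show False using ex T_def by auto
    qed
    have "\<forall>j\<in>C. x j = 0" using indep_lemma[OF finC hyp eqs] .
    then have "q1 = q2"
      using cv1 cv2 by (auto simp: x_def C_def fun_eq_iff) (metis not_le)
    with neq show False by simp
  qed
qed

end
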